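(* Let $K$ be a compact Hausdorff space. If $C(K)$ has the ball fixed point property, then $K$ is an $F$-space.
   Context: $C(K)$ is the real Banach space of continuous functions $K\to\mathbb{R}$ with the sup norm. A real Banach space $X$ has the ball fixed point property (BFPP) if every nonexpansive map $T\colon B_X\to B_X$ (i.e. $\|Tx-Ty\|\le\|x-y\|$) has a fixed point, where $B_X$ is the closed unit ball. A compact space $K$ is an $F$-space if for every $g\in C(K)$ there exists a continuous $f\colon K\to[-1,1]$ with $g\cdot f=|g|$ (equivalently, disjoint cozero sets of $K$ have disjoint closures). *)

theory Defs
  imports "HOL-Analysis.Analysis"
begin

text \<open>C(K) is rendered as the library Banach space ('a, real) bcontfun of bounded
continuous real functions with the sup norm; for compact K every continuous
function is bounded, so this is exactly C(K).\<close>

definition nonexpansive_on :: "'b::metric_space set \<Rightarrow> ('b \<Rightarrow> 'b) \<Rightarrow> bool" where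
  "nonexpansive_on S T \<longleftrightarrow> (\<forall>x\<in>S. \<forall>y\<in>S. dist (T x) (T y) \<le> dist x y)"

definition ball_fixed_point_property :: "'b::real_normed_vector itself \<Rightarrow> bool" where
  "ball_fixed_point_property _ \<longleftrightarrow>
     (\<forall>T::'b \<Rightarrow> 'b. T ` cball 0 1 \<subseteq> cball 0 1 \<and> nonexpansive_on (cball 0 1) T
        \<longrightarrow> (\<exists>x\<in>cball 0 1. T x = x))"

definition F_space :: "'a::topological_space itself \<Rightarrow> bool" where
  "F_space _ \<longleftrightarrow>
     (\<forall>g::'a \<Rightarrow> real. continuous_on UNIV g \<longrightarrow>
        (\<exists>f::'a \<Rightarrow> real. continuous_on UNIV f \<and> (\<forall>x. f x \<in> {-1..1}) \<and>
           (\<forall>x. g x * f x = \<bar>g x\<bar>)))"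

end

theory Submission
  imports Defs
begin

definition clipT :: "('a::topological_space \<Rightarrow> real) \<Rightarrow> ('a, real) bcontfun \<Rightarrow> ('a, real) bcontfun" where
  "clipT g x = Bcontfun (\<lambda>t. max (-1) (min 1 (apply_bcontfun x t + g t)))"

lemma clipT_apply:
  assumes "continuous_on UNIV g"
  shows "apply_bcontfun (clipT g x) t = max (-1) (min 1 (apply_bcontfun x t + g t))"
proof -
  have "(\<lambda>t. max (-1) (min 1 (apply_bcontfun x t + g t))) \<in> bcontfun"
    by (rule bcontfun_normI[where b=1]) (auto intro!: continuous_intros assms)
  then show ?thesis unfolding clipT_def by (simp add: Bcontfun_inverse)
qed

theorem mainTheorem2:
  assumes "compact (UNIV :: 'a::t2_space set)"
    and "ball_fixed_point_property TYPE(('a, real) bcontfun)"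
  shows "F_space TYPE('a)"
  unfolding F_space_def
proof (intro allI impI)
  fix g :: "'a \<Rightarrow> real"
  assume g: "continuous_on UNIV g"
  let ?T = "clipT g"
  have img: "?T ` cball 0 1 \<subseteq> cball 0 1"
  proof
    fix y assume "y \<in> ?T ` cball 0 1"
    then obtain x where y: "y = ?T x" by auto
    have "norm y \<le> 1"
      by (rule norm_bound) (simp add: y clipT_apply[OF g])
    then show "y \<in> cball 0 1" by simp
  qed
  have ne: "nonexpansive_on (cball 0 1) ?T"
    unfolding nonexpansive_on_def
  proof (intro ballI)
    fix x y :: "('a, real) bcontfun"
    show "dist (?T x) (?T y) \<le> dist x y"
    proof (rule dist_bound)
      fix t
      have "dist (apply_bcontfun x t) (apply_bcontfun y t) \<le> dist x y" by (rule dist_bounded)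
      then show "dist (apply_bcontfun (?T x) t) (apply_bcontfun (?T y) t) \<le> dist x y"
        by (simp add: clipT_apply[OF g] dist_real_def)
    qed
  qed
  obtain x where x: "x \<in> cball 0 1" "?T x = x"
    using assms(2) img ne unfolding ball_fixed_point_property_def by blast
  have fx: "max (-1) (min 1 (apply_bcontfun x t + g t)) = apply_bcontfun x t" for t
    using x(2) clipT_apply[OF g, of x t] by simp
  have bx: "\<bar>apply_bcontfun x t\<bar> \<le> 1" for t
    using norm_bounded[of x t] x(1) by simp
  show "\<exists>f. continuous_on UNIV f \<and> (\<forall>x. f x \<in> {-1..1}) \<and> (\<forall>x. g x * f x = \<bar>g x\<bar>)"
  proof (intro exI conjI allI)
    show "continuous_on UNIV (apply_bcontfun x)" by simp
    fix t
    show "apply_bcontfun x t \<in> {-1..1}" using bx[of t] by auto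
    show "g t * apply_bcontfun x t = \<bar>g t\<bar>"
    proof -
      have A: "g t > 0 \<Longrightarrow> apply_bcontfun x t = 1" using fx[of t] bx[of t] by argo
      have B: "g t < 0 \<Longrightarrow> apply_bcontfun x t = -1" using fx[of t] bx[of t] by argo
      show ?thesis using A B by (cases "g t > 0"; cases "g t < 0") auto
    qed
  qed
qed

end
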